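(* Let $r\ge 2$ be an integer, $\overline{x}\in\mathbb{R}^n$, let $f:\mathbb{R}^n\to\mathbb{R}$ be of class $C^r$ on an open neighbourhood $V$ of $\overline{x}$, and set $\Sigma:=\{x\in V\mid\nabla f(x)=0\}$. Let $c,\delta,\overline{w}>0$ satisfy $$\|\nabla f(x)\|\ge c\,\mathrm{dist}(x,\Sigma)^{r-1}\quad\text{for all }x\in\mathcal{H}_r^{\Sigma}(f,\overline{x};\overline{w})\cap\mathbb{B}_\delta(\overline{x}).$$ If $f$ has a local minimum at $\overline{x}$, then there exists $\epsilon>0$ such that for every function $h:\mathbb{R}^n\to\mathbb{R}$ for which there is $\rho>0$ with $|h(x)-h(\overline{x})|\le\epsilon\,\|\nabla f(x)\|^r$ for all $x\in\mathbb{B}_\rho(\overline{x})$, the function $f+h$ has a local minimum at $\overline{x}$.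
   Context: $\mathbb{B}_\delta(x)$ denotes the closed Euclidean ball of radius $\delta$ centered at $x$, and $\mathrm{dist}(x,\Sigma)=\inf_{y\in\Sigma}\|x-y\|$. The horn-neighbourhood of degree $r$ and width $\overline{w}>0$ is $\mathcal{H}_r^{\Sigma}(f,\overline{x};\overline{w}):=\{x\in\mathbb{R}^n\mid |f(x)-f(\overline{x})|\le\overline{w}\,\mathrm{dist}(x,\Sigma)^r\}$. *)

theory Defs
  imports "HOL-Analysis.Analysis"
begin

definition grad :: "('a::euclidean_space \<Rightarrow> real) \<Rightarrow> 'a \<Rightarrow> 'a" where
  "grad f x = (\<Sum>i\<in>Basis. frechet_derivative f (at x) i *\<^sub>R i)"

fun Ck_on :: "nat \<Rightarrow> 'a::euclidean_space set \<Rightarrow> ('a \<Rightarrow> real) \<Rightarrow> bool" where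
  "Ck_on 0 V f = continuous_on V f"
| "Ck_on (Suc k) V f = ((\<forall>x\<in>V. f differentiable (at x)) \<and>
      (\<forall>i\<in>Basis. Ck_on k V (\<lambda>x. frechet_derivative f (at x) i)))"

definition crit_set :: "('a::euclidean_space \<Rightarrow> real) \<Rightarrow> 'a set \<Rightarrow> 'a set" where
  "crit_set f V = {x\<in>V. grad f x = 0}"

definition horn_nbhd :: "nat \<Rightarrow> 'a::euclidean_space set \<Rightarrow> ('a \<Rightarrow> real) \<Rightarrow> 'a \<Rightarrow> real \<Rightarrow> 'a set" where
  "horn_nbhd r \<Sigma> f xbar w = {x. \<bar>f x - f xbar\<bar> \<le> w * infdist x \<Sigma> ^ r}"

definition local_min_at :: "('a::metric_space \<Rightarrow> real) \<Rightarrow> 'a \<Rightarrow> bool" where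
  "local_min_at f x \<longleftrightarrow> (\<exists>e>0. \<forall>y\<in>ball x e. f x \<le> f y)"

end

theory Submission
  imports Defs
begin

lemma Ck_cont: "Ck_on k V f \<Longrightarrow> continuous_on V f"
proof (induction k arbitrary: f)
  case 0 then show ?case by simp
next
  case (Suc k) then show ?case
    by (auto intro!: continuous_at_imp_continuous_on differentiable_imp_continuous_within)
qed

lemma grad_apply:
  fixes f :: "'a::euclidean_space \<Rightarrow> real"
  assumes "f differentiable (at z)"
  shows "frechet_derivative f (at z) v = grad f z \<bullet> v"
proof -
  let ?D = "frechet_derivative f (at z)"
  have lin: "linear ?D" using assms frechet_derivative_works has_derivative_linear by blast
  have "?D v = ?D (\<Sum>i\<in>Basis. (v\<bullet>i) *\<^sub>R i)" by (simp add: euclidean_representation)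
  also have "\<dots> = (\<Sum>i\<in>Basis. (v\<bullet>i) * ?D i)" using lin by (simp add: linear_sum linear_scale)
  also have "\<dots> = grad f z \<bullet> v" unfolding grad_def inner_sum_left
    by (intro sum.cong refl) (simp add: inner_commute)
  finally show ?thesis .
qed

lemma lip1:
  fixes g :: "'a::euclidean_space \<Rightarrow> real"
  assumes "cball a R \<subseteq> V" "\<forall>x\<in>V. g differentiable (at x)"
    "\<forall>j\<in>Basis. continuous_on V (\<lambda>x. frechet_derivative g (at x) j)"
  shows "\<exists>B. \<forall>y\<in>cball a R. \<forall>z\<in>cball a R. \<bar>g y - g z\<bar> \<le> B * norm (y - z)"
proof -
  let ?D = "\<lambda>x. frechet_derivative g (at x)"
  have "continuous_on (cball a R) (\<lambda>x. \<Sum>j\<in>Basis. \<bar>?D x j\<bar>)"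
  proof (rule continuous_on_sum)
    fix j :: 'a assume "j \<in> Basis"
    then have "continuous_on V (\<lambda>x. ?D x j)" using assms(3) by blast
    then show "continuous_on (cball a R) (\<lambda>x. \<bar>?D x j\<bar>)"
      using assms(1) by (intro continuous_on_rabs) (rule continuous_on_subset)
  qed
  then have "compact ((\<lambda>x. \<Sum>j\<in>Basis. \<bar>?D x j\<bar>) ` cball a R)"
    by (rule compact_continuous_image) simp
  from compact_imp_bounded[OF this] obtain B where
    "\<forall>y\<in>(\<lambda>x. \<Sum>j\<in>Basis. \<bar>?D x j\<bar>) ` cball a R. norm y \<le> B"
    unfolding bounded_iff by blast
  then have B: "\<forall>x\<in>cball a R. norm (\<Sum>j\<in>Basis. \<bar>?D x j\<bar>) \<le> B" by blast
  have on: "onorm (?D x) \<le> B" if x: "x \<in> cball a R" for x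
  proof (rule onorm_le)
    fix h :: 'a
    have lin: "linear (?D x)" using assms x frechet_derivative_works has_derivative_linear by blast
    have "?D x h = ?D x (\<Sum>j\<in>Basis. (h\<bullet>j) *\<^sub>R j)" by (simp add: euclidean_representation)
    also have "\<dots> = (\<Sum>j\<in>Basis. (h\<bullet>j) * ?D x j)" using lin by (simp add: linear_sum linear_scale)
    finally have eq: "?D x h = (\<Sum>j\<in>Basis. (h\<bullet>j) * ?D x j)" .
    have "norm (?D x h) \<le> (\<Sum>j\<in>Basis. \<bar>(h\<bullet>j) * ?D x j\<bar>)"
      unfolding eq real_norm_def by (rule sum_abs)
    also have "\<dots> = (\<Sum>j\<in>Basis. \<bar>h\<bullet>j\<bar> * \<bar>?D x j\<bar>)" by (simp add: abs_mult)
    also have "\<dots> \<le> (\<Sum>j\<in>Basis. norm h * \<bar>?D x j\<bar>)"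
      by (intro sum_mono mult_right_mono) (auto simp: Basis_le_norm)
    also have "\<dots> = norm h * (\<Sum>j\<in>Basis. \<bar>?D x j\<bar>)" by (simp add: sum_distrib_left)
    also have "\<dots> \<le> norm h * B" using B x by (intro mult_left_mono) auto
    finally show "norm (?D x h) \<le> B * norm h" by (simp add: mult.commute)
  qed
  have der: "(g has_derivative ?D x) (at x within cball a R)" if "x \<in> cball a R" for x
    using assms(1,2) that by (meson subsetD frechet_derivative_works has_derivative_at_withinI)
  show ?thesis
  proof (intro exI ballI)
    fix y z assume "y \<in> cball a R" "z \<in> cball a R"
    then show "\<bar>g y - g z\<bar> \<le> B * norm (y - z)"
      using differentiable_bound[OF convex_cball der on] by simp
  qed
qed


theorem corollary3p9:
  fixes f :: "'a::euclidean_space \<Rightarrow> real" and xbar :: 'a and V :: "'a set"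
    and r :: nat and c \<delta> w :: real
  assumes "r \<ge> 2" and "open V" and "xbar \<in> V" and "Ck_on r V f"
    and "c > 0" and "\<delta> > 0" and "w > 0"
    and "\<forall>x \<in> horn_nbhd r (crit_set f V) f xbar w \<inter> cball xbar \<delta>.
           norm (grad f x) \<ge> c * infdist x (crit_set f V) ^ (r - 1)"
    and "local_min_at f xbar"
  shows "\<exists>\<epsilon>>0. \<forall>h :: 'a \<Rightarrow> real.
           (\<exists>\<rho>>0. \<forall>x\<in>cball xbar \<rho>. \<bar>h x - h xbar\<bar> \<le> \<epsilon> * norm (grad f x) ^ r)
           \<longrightarrow> local_min_at (\<lambda>x. f x + h x) xbar"
proof -
  let ?D = "\<lambda>x. frechet_derivative f (at x)"
  let ?g = "\<lambda>i x. frechet_derivative f (at x) i"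
  define k where "k = r - 2"
  have rk: "r = Suc (Suc k)" using assms(1) unfolding k_def by simp
  have diff: "\<forall>x\<in>V. f differentiable (at x)" and Cg: "\<forall>i\<in>Basis. Ck_on (Suc k) V (?g i)"
    using assms(4) rk by auto
  obtain R where R: "R > 0" "cball xbar R \<subseteq> V" using assms(2,3) open_contains_cball by blast
  have "\<forall>i\<in>Basis. \<exists>B. \<forall>y\<in>cball xbar R. \<forall>z\<in>cball xbar R. \<bar>?g i y - ?g i z\<bar> \<le> B * norm (y - z)"
  proof
    fix i :: 'a assume i: "i \<in> Basis"
    have "\<forall>x\<in>V. ?g i differentiable (at x)"
      "\<forall>j\<in>Basis. Ck_on k V (\<lambda>x. frechet_derivative (?g i) (at x) j)"
      using Cg i by auto
    then show "\<exists>B. \<forall>y\<in>cball xbar R. \<forall>z\<in>cball xbar R. \<bar>?g i y - ?g i z\<bar> \<le> B * norm (y - z)"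
      using lip1[OF R(2)] Ck_cont by blast
  qed
  from bchoice[OF this] obtain Bf where Bf: "\<forall>i\<in>Basis. \<forall>y\<in>cball xbar R. \<forall>z\<in>cball xbar R.
      \<bar>?g i y - ?g i z\<bar> \<le> Bf i * norm (y - z)"
    by blast
  define L where "L = (\<Sum>i\<in>Basis. \<bar>Bf i\<bar>) + 1"
  have Lpos: "L > 0" unfolding L_def by (simp add: sum_nonneg add_nonneg_pos)
  have Lip: "norm (grad f y - grad f z) \<le> L * norm (y - z)"
    if y: "y \<in> cball xbar R" and z: "z \<in> cball xbar R" for y z
  proof -
    have "grad f y - grad f z = (\<Sum>i\<in>Basis. (?g i y - ?g i z) *\<^sub>R i)"
      unfolding grad_def by (simp add: sum_subtractf scaleR_diff_left)
    then have "norm (grad f y - grad f z) \<le> (\<Sum>i\<in>Basis. \<bar>?g i y - ?g i z\<bar>)"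
      using norm_sum[of "\<lambda>i. (?g i y - ?g i z) *\<^sub>R i" Basis] by simp
    also have "\<dots> \<le> (\<Sum>i\<in>Basis. \<bar>Bf i\<bar> * norm (y - z))"
    proof (rule sum_mono)
      fix i :: 'a assume i: "i \<in> Basis"
      have "\<bar>?g i y - ?g i z\<bar> \<le> Bf i * norm (y - z)" using Bf i y z by blast
      also have "\<dots> \<le> \<bar>Bf i\<bar> * norm (y - z)" by (intro mult_right_mono) auto
      finally show "\<bar>?g i y - ?g i z\<bar> \<le> \<bar>Bf i\<bar> * norm (y - z)" .
    qed
    also have "\<dots> \<le> L * norm (y - z)" unfolding L_def
      by (simp add: sum_distrib_right[symmetric] distrib_right)
    finally show ?thesis .
  qed
  obtain e where e: "e > 0" "\<forall>y\<in>ball xbar e. f xbar \<le> f y"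
    using assms(9) unfolding local_min_at_def by blast
  have "?D xbar = (\<lambda>v. 0)"
    using differential_zero_maxmin[of xbar "ball xbar e" f "?D xbar"] e diff assms(3)
      frechet_derivative_works by auto
  then have g0: "grad f xbar = 0" unfolding grad_def by simp
  define s where "s = min (min e R) (1/L) / 2"
  define m where "m = min (min e R) (1/L)"
  have m: "m \<le> 1/L" "m \<le> e" "m \<le> R" "m > 0" using e R Lpos by (auto simp: m_def)
  have "L * m \<le> L * (1/L)" using m Lpos by (intro mult_left_mono) auto
  then have "L * m \<le> 1" using Lpos by simp
  then have s: "s > 0" "s \<le> e/2" "s \<le> R/2" "L * s \<le> 1/2"
    using m unfolding s_def m_def[symmetric] by auto
  define t where "t = 1 / (2*L)"
  have t: "t > 0" "L * t = 1/2" using Lpos by (auto simp: t_def)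
  have key: "norm (grad f x) ^ 2 / (4*L) \<le> f x - f xbar \<and> norm (grad f x) \<le> 1"
    if x: "x \<in> ball xbar s" for x
  proof -
    define u where "u = grad f x"
    have xR: "x \<in> cball xbar R" using x s by (auto simp: dist_commute)
    have cR: "xbar \<in> cball xbar R" using R by simp
    have dx: "norm (x - xbar) < s" using x by (simp add: dist_norm norm_minus_commute)
    have "norm u \<le> L * norm (x - xbar)" using Lip[OF xR cR] g0 by (simp add: u_def)
    also have "\<dots> \<le> L * s" using dx Lpos by (intro mult_left_mono) auto
    finally have nu: "norm u \<le> L * s" .
    have nu1: "norm u \<le> 1" using nu s by simp
    have "t * norm u \<le> t * (L * s)" using nu t by (intro mult_left_mono) auto
    also have "t * (L * s) = (L * t) * s" by simp
    finally have tu: "t * norm u \<le> s/2" using t by simp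
    define S where "S = cball x (t * norm u)"
    have SR: "S \<subseteq> cball xbar R"
    proof
      fix z assume "z \<in> S"
      then have "dist x z \<le> t * norm u" unfolding S_def by simp
      moreover have "dist xbar z \<le> dist xbar x + dist x z" by (rule dist_triangle)
      moreover have "dist xbar x < s" using x by simp
      ultimately show "z \<in> cball xbar R" using s tu by simp
    qed
    have b: "x - t *\<^sub>R u \<in> ball xbar e"
    proof -
      have "dist xbar (x - t *\<^sub>R u) \<le> dist xbar x + dist x (x - t *\<^sub>R u)" by (rule dist_triangle)
      moreover have "dist x (x - t *\<^sub>R u) = t * norm u" using t by (simp add: dist_norm)
      moreover have "dist xbar x < s" using x by simp
      ultimately show ?thesis using s tu e unfolding mem_ball by linarith
    qed
    have lin: "norm (f (x - t *\<^sub>R u) - f x - ?D x ((x - t *\<^sub>R u) - x))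
        \<le> norm ((x - t *\<^sub>R u) - x) * (L * (t * norm u))"
    proof (rule differentiable_bound_linearization[where S="S" and f'="?D"])
      fix \<tau> :: real assume "\<tau> \<in> {0..1}"
      then show "x + \<tau> *\<^sub>R ((x - t *\<^sub>R u) - x) \<in> S"
        unfolding S_def using t by (auto simp: dist_norm abs_of_pos mult_left_le_one_le)
    next
      fix z assume z: "z \<in> S"
      then have "z \<in> V" using SR R by auto
      then show "(f has_derivative ?D z) (at z within S)"
        using diff frechet_derivative_works has_derivative_at_withinI by blast
    next
      fix z assume z: "z \<in> S"
      then have zV: "z \<in> V" and zR: "z \<in> cball xbar R" using SR R by auto
      have xV: "x \<in> V" using xR R by auto
      show "onorm (?D z - ?D x) \<le> L * (t * norm u)"
      proof (rule onorm_le)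
        fix v
        have "norm ((?D z - ?D x) v) = \<bar>(grad f z - grad f x) \<bullet> v\<bar>"
          using grad_apply[of f z v] grad_apply[of f x v] diff zV xV by (simp add: inner_diff_left)
        also have "\<dots> \<le> norm (grad f z - grad f x) * norm v" by (rule Cauchy_Schwarz_ineq2)
        also have "\<dots> \<le> L * norm (z - x) * norm v"
          using Lip[OF zR xR] by (simp add: mult_right_mono)
        also have "\<dots> \<le> L * (t * norm u) * norm v"
          using z Lpos unfolding S_def by (intro mult_right_mono) (auto simp: dist_norm norm_minus_commute)
        finally show "norm ((?D z - ?D x) v) \<le> L * (t * norm u) * norm v" .
      qed
    next
      show "x \<in> S" unfolding S_def using t by simp
    qed
    have Dx: "?D x ((x - t *\<^sub>R u) - x) = - t * (norm u)^2"
    proof -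
      have "x \<in> V" using xR R by auto
      then have "?D x ((x - t *\<^sub>R u) - x) = grad f x \<bullet> ((x - t *\<^sub>R u) - x)"
        using grad_apply[of f x] diff by blast
      then show ?thesis unfolding u_def by (simp add: power2_norm_eq_inner)
    qed
    have "f (x - t *\<^sub>R u) - f x + t * (norm u)^2 \<le> t * norm u * (L * (t * norm u))"
      using lin Dx t by (simp add: abs_of_pos)
    also have "\<dots> = (L*t) * t * (norm u)^2" by (simp add: power2_eq_square)
    finally have "f (x - t *\<^sub>R u) - f x \<le> - t/2 * (norm u)^2" using t by simp
    moreover have "f xbar \<le> f (x - t *\<^sub>R u)" using e b by blast
    moreover have "t/2 = 1/(4*L)" unfolding t_def by simp
    ultimately show ?thesis using nu1 unfolding u_def by simp
  qed
  show ?thesis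
  proof (intro exI[of _ "1/(4*L)"] conjI allI impI)
    show "1/(4*L) > 0" using Lpos by simp
  next
    fix h :: "'a \<Rightarrow> real"
    assume "\<exists>\<rho>>0. \<forall>x\<in>cball xbar \<rho>. \<bar>h x - h xbar\<bar> \<le> 1/(4*L) * norm (grad f x) ^ r"
    then obtain \<rho> where \<rho>: "\<rho> > 0" "\<forall>x\<in>cball xbar \<rho>. \<bar>h x - h xbar\<bar> \<le> 1/(4*L) * norm (grad f x) ^ r"
      by blast
    show "local_min_at (\<lambda>x. f x + h x) xbar"
      unfolding local_min_at_def
    proof (intro exI[of _ "min s \<rho>"] conjI ballI)
      show "min s \<rho> > 0" using s \<rho> by simp
    next
      fix y assume y: "y \<in> ball xbar (min s \<rho>)"
      then have k: "norm (grad f y) ^ 2 / (4*L) \<le> f y - f xbar" "norm (grad f y) \<le> 1"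
        using key by auto
      have "norm (grad f y) ^ r \<le> norm (grad f y) ^ 2"
        using k(2) assms(1) by (simp add: power_decreasing)
      then have "1/(4*L) * norm (grad f y) ^ r \<le> norm (grad f y) ^ 2 / (4*L)"
        using Lpos by (simp add: divide_right_mono)
      moreover have "\<bar>h y - h xbar\<bar> \<le> 1/(4*L) * norm (grad f y) ^ r" using \<rho> y by auto
      ultimately show "f xbar + h xbar \<le> f y + h y" using k by linarith
    qed
  qed
qed

end
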